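(* Let $W:\mathrm{cont}^+(\mathbb{T},\xi_0)\to\mathbb{R}$ be a positive function that is positively 1-homogeneous and invariant under the adjoint action of $\mathrm{Cont}(\mathbb{T},\xi_0)=\mathrm{Diff}_0(\mathbb{T})$. Then there exists $c>0$ such that $W=cV$. In particular, $V$ is, up to rescaling, the unique bi-invariant Lorentz--Finsler metric on $(\mathrm{Cont}(\mathbb{T},\xi_0),\mathrm{cont}^+(\mathbb{T},\xi_0))$.
   Context: $\mathbb{T}=\mathbb{R}/\mathbb{Z}$ with trivial contact structure $\xi_0=\{0\}$ co-oriented by the standard orientation; $\mathrm{Diff}_0(\mathbb{T})$ is the group of orientation-preserving diffeomorphisms, acting on vector fields by push-forward $X\mapsto\phi_*X$ (the adjoint action). $\mathrm{cont}^+(\mathbb{T},\xi_0)$ is the set of vector fields $H\,\partial_x$ with $H>0$. $V(H\partial_x)=\left(\int_0^1\frac{\mathrm{d}x}{H(x)}\right)^{-1}$. A bi-invariant Lorentz--Finsler metric on the cone $\mathrm{cont}^+$ is a positive, positively 1-homogeneous, adjoint-invariant function on it that is smooth, strongly concave in non-radial directions, and extends continuously by $0$ to the boundary of the cone. *)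

theory Defs
  imports "HOL-Analysis.Analysis"
begin

text \<open>Functions on the circle T = R/Z are represented as 1-periodic functions on R.
  A vector field H d/dx on T is represented by its 1-periodic coefficient H.\<close>

definition smooth_fun :: "(real \<Rightarrow> real) \<Rightarrow> bool" where
  "smooth_fun f \<longleftrightarrow> (\<forall>n x. ((deriv ^^ n) f) differentiable (at x))"

definition periodic1 :: "(real \<Rightarrow> real) \<Rightarrow> bool" where
  "periodic1 f \<longleftrightarrow> (\<forall>x. f (x + 1) = f x)"

definition cont_plus :: "(real \<Rightarrow> real) set" where
  "cont_plus = {H. smooth_fun H \<and> periodic1 H \<and> (\<forall>x. H x > 0)}"

text \<open>Diff_0(T): orientation-preserving diffeomorphisms of T, represented by their
  lifts to R: smooth maps phi with phi(x+1) = phi(x) + 1 and phi' > 0.\<close>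
definition diff0 :: "(real \<Rightarrow> real) set" where
  "diff0 = {\<phi>. smooth_fun \<phi> \<and> (\<forall>x. \<phi> (x + 1) = \<phi> x + 1) \<and> (\<forall>x. deriv \<phi> x > 0)}"

definition push :: "(real \<Rightarrow> real) \<Rightarrow> (real \<Rightarrow> real) \<Rightarrow> (real \<Rightarrow> real)" where
  "push \<phi> H = (\<lambda>y. deriv \<phi> (inv \<phi> y) * H (inv \<phi> y))"

definition V :: "(real \<Rightarrow> real) \<Rightarrow> real" where
  "V H = 1 / integral {0..1} (\<lambda>x. 1 / H x)"

end

theory Submission imports Defs begin

fun Cn :: "nat \<Rightarrow> (real \<Rightarrow> real) \<Rightarrow> bool" where
  "Cn 0 f = (\<forall>x. f differentiable (at x))"
| "Cn (Suc n) f = ((\<forall>x. f differentiable (at x)) \<and> Cn n (deriv f))"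

lemma Cn_iff: "Cn n f \<longleftrightarrow> (\<forall>k\<le>n. \<forall>x. ((deriv ^^ k) f) differentiable (at x))"
proof (induction n arbitrary: f)
  case 0 then show ?case by simp
next
  case (Suc n)
  have "(\<forall>k\<le>Suc n. \<forall>x. ((deriv ^^ k) f) differentiable (at x)) \<longleftrightarrow>
        (\<forall>x. f differentiable (at x)) \<and> (\<forall>k\<le>n. \<forall>x. ((deriv ^^ k) (deriv f)) differentiable (at x))"
    (is "?L \<longleftrightarrow> ?R")
  proof
    assume L: ?L
    show ?R
    proof (intro conjI allI impI)
      fix x show "f differentiable (at x)" using L[rule_format, of 0] by simp
    next
      fix k x assume "k \<le> n"
      then show "((deriv ^^ k) (deriv f)) differentiable (at x)"
        using L[rule_format, of "Suc k"] by (simp add: funpow_Suc_right del: funpow.simps)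
    qed
  next
    assume R: ?R
    show ?L
    proof (intro allI impI)
      fix k x assume k: "k \<le> Suc n"
      show "((deriv ^^ k) f) differentiable (at x)"
      proof (cases k)
        case 0 then show ?thesis using R by simp
      next
        case (Suc j) then show ?thesis using R k
          by (simp add: funpow_Suc_right del: funpow.simps)
      qed
    qed
  qed
  then show ?case using Suc.IH by simp
qed

lemma smooth_Cn: "smooth_fun f \<longleftrightarrow> (\<forall>n. Cn n f)"
  unfolding smooth_fun_def Cn_iff by auto

lemma Cn_diff: "Cn n f \<Longrightarrow> f differentiable (at x)"
  by (cases n) auto

lemma Cn_mono: "Cn (Suc n) f \<Longrightarrow> Cn n f"
proof (induction n arbitrary: f)
  case 0 then show ?case by simp
next
  case (Suc n) then show ?case by simp
qed

lemma deriv_fun_eq: "(\<And>x. (f has_field_derivative f' x) (at x)) \<Longrightarrow> deriv f = f'"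
  by (rule ext) (rule DERIV_imp_deriv)

lemma Cn_const: "Cn n (\<lambda>x. c)"
proof (induction n arbitrary: c)
  case 0 then show ?case by simp
next
  case (Suc n)
  have "deriv (\<lambda>x. c) = (\<lambda>x. 0)" by (rule deriv_fun_eq) auto
  then show ?case using Suc by simp
qed

lemma Cn_add: "Cn n f \<Longrightarrow> Cn n g \<Longrightarrow> Cn n (\<lambda>x. f x + g x)"
proof (induction n arbitrary: f g)
  case 0 then show ?case by auto
next
  case (Suc n)
  have "deriv (\<lambda>x. f x + g x) = (\<lambda>x. deriv f x + deriv g x)"
    apply (rule deriv_fun_eq)
    using Suc.prems by (auto intro!: derivative_eq_intros DERIV_deriv_iff_real_differentiable[THEN iffD2] simp: algebra_simps)
  then show ?case using Suc by auto
qed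

lemma Cn_mult: "Cn n f \<Longrightarrow> Cn n g \<Longrightarrow> Cn n (\<lambda>x. f x * g x)"
proof (induction n arbitrary: f g)
  case 0 then show ?case by auto
next
  case (Suc n)
  have "deriv (\<lambda>x. f x * g x) = (\<lambda>x. deriv f x * g x + f x * deriv g x)"
    apply (rule deriv_fun_eq)
    using Suc.prems by (auto intro!: derivative_eq_intros DERIV_deriv_iff_real_differentiable[THEN iffD2] simp: algebra_simps)
  moreover have "Cn n (\<lambda>x. deriv f x * g x + f x * deriv g x)"
    using Suc Cn_mono by (intro Cn_add) auto
  ultimately show ?case using Suc by auto
qed

lemma Cn_inv: "Cn n H \<Longrightarrow> (\<And>x. H x > 0) \<Longrightarrow> Cn n (\<lambda>x. 1 / H x)"
proof (induction n arbitrary: H)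
  case 0 then show ?case
    by (auto intro!: derivative_intros simp: less_imp_neq[symmetric] divide_inverse)
next
  case (Suc n)
  have d: "\<And>x. (H has_field_derivative deriv H x) (at x)"
    using Suc.prems by (auto simp: DERIV_deriv_iff_real_differentiable)
  have "deriv (\<lambda>x. 1 / H x) = (\<lambda>x. (-1) * deriv H x * ((1 / H x) * (1 / H x)))"
    apply (rule deriv_fun_eq)
    using Suc.prems(2) d
    by (auto intro!: derivative_eq_intros simp: less_imp_neq[symmetric] field_simps power2_eq_square)
  moreover have "Cn n (\<lambda>x. (-1) * deriv H x * ((1 / H x) * (1 / H x)))"
    using Suc Cn_mono Cn_const by (intro Cn_mult) auto
  moreover have "\<forall>x. (\<lambda>x. 1 / H x) differentiable (at x)"
    using Suc.prems d
    by (auto intro!: derivative_intros simp: less_imp_neq[symmetric] divide_inverse)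
  ultimately show ?case by simp
qed


lemma main_push:
  assumes H: "H \<in> cont_plus"
  shows "V H > 0 \<and> (\<exists>\<phi>\<in>diff0. push \<phi> H = (\<lambda>x. V H * 1))"
proof -
  have sH: "\<And>n. Cn n H" and per: "\<And>x. H (x+1) = H x" and Hp: "\<And>x. H x > 0"
    using H by (auto simp: cont_plus_def smooth_Cn periodic1_def)
  define g where "g = (\<lambda>x. 1 / H x)"
  have sg: "\<And>n. Cn n g" unfolding g_def using sH Hp by (intro Cn_inv)
  have gp: "\<And>x. g x > 0" using Hp by (simp add: g_def)
  have gper: "\<And>x. g (x+1) = g x" using per by (simp add: g_def)
  have gc: "\<And>x. isCont g x" using Cn_diff[OF sg[of 0]] differentiable_imp_continuous_within by blast
  obtain F where F: "\<And>x. (F has_vector_derivative g x) (at x)"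
    using einterval_antiderivative[of "-\<infinity>" "\<infinity>" g] gc by auto
  have Fd: "\<And>x. (F has_field_derivative g x) (at x)"
    using F by (simp add: has_real_derivative_iff_has_vector_derivative)
  define I where "I = F 1 - F 0"
  have Fmono: "\<And>a b. a < b \<Longrightarrow> F a < F b"
  proof -
    fix a b :: real assume ab: "a < b"
    show "F a < F b"
      by (rule DERIV_pos_imp_increasing[OF ab]) (use Fd gp in blast)
  qed
  have Ipos: "I > 0" using Fmono[of 0 1] by (simp add: I_def)
  have intg: "(g has_integral (F 1 - F 0)) {0..1}"
    using fundamental_theorem_of_calculus[of 0 1 F g] F
    by (auto intro: has_vector_derivative_at_within)
  have VH: "V H = 1 / I"
    using intg by (simp add: V_def I_def g_def[symmetric] integral_unique)
  have Fper: "\<And>x. F (x+1) = F x + I"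
  proof -
    have "\<And>x. ((\<lambda>x. F (x+1) - F x) has_field_derivative 0) (at x)"
    proof -
      fix x
      have "((\<lambda>x. F (x+1) - F x) has_field_derivative g (x+1) * 1 - g x) (at x)"
        using DERIV_diff[OF Fd[of "x+1", unfolded DERIV_shift] Fd[of x]] by simp
      then show "((\<lambda>x. F (x+1) - F x) has_field_derivative 0) (at x)" using gper by simp
    qed
    then have "\<And>x. F (x+1) - F x = F (0+1) - F 0"
      using DERIV_isconst_all[where f="\<lambda>x. F (x+1) - F x"] by blast
    then show "\<And>x. F (x+1) = F x + I" by (simp add: I_def algebra_simps)
  qed
  define \<phi> where "\<phi> = (\<lambda>x. (F x - F 0) / I)"
  have \<phi>d: "\<And>x. (\<phi> has_field_derivative g x / I) (at x)"
  proof -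
    fix x
    have "((\<lambda>x. F x - F 0) has_field_derivative g x - 0) (at x)"
      by (rule DERIV_diff[OF Fd DERIV_const])
    from DERIV_cdivide[OF this, of I] show "(\<phi> has_field_derivative g x / I) (at x)"
      unfolding \<phi>_def by simp
  qed
  have d\<phi>: "deriv \<phi> = (\<lambda>x. g x / I)" by (rule deriv_fun_eq[OF \<phi>d])
  have \<phi>per: "\<And>x. \<phi> (x+1) = \<phi> x + 1" using Ipos by (simp add: \<phi>_def Fper field_simps)
  have \<phi>mono: "\<And>a b. a < b \<Longrightarrow> \<phi> a < \<phi> b"
    using Fmono Ipos by (simp add: \<phi>_def divide_strict_right_mono)
  have \<phi>smooth: "smooth_fun \<phi>"
    unfolding smooth_Cn
  proof
    fix n
    show "Cn n \<phi>"
    proof (cases n)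
      case 0 then show ?thesis using \<phi>d real_differentiable_def by auto
    next
      case (Suc m)
      have "Cn m (\<lambda>x. g x * (1/I))" by (intro Cn_mult sg Cn_const)
      then show ?thesis using Suc \<phi>d real_differentiable_def d\<phi> by auto
    qed
  qed
  have \<phi>diff: "\<phi> \<in> diff0"
    unfolding diff0_def using \<phi>smooth \<phi>per d\<phi> gp Ipos by auto
  have \<phi>nat: "\<And>n::nat. \<phi> (real n) = real n"
  proof -
    fix n :: nat show "\<phi> (real n) = real n"
    proof (induction n)
      case 0 then show ?case by (simp add: \<phi>_def)
    next
      case (Suc n)
      have "\<phi> (real n + 1) = \<phi> (real n) + 1" by (rule \<phi>per)
      then show ?case using Suc by (simp add: add.commute)
    qed
  qed
  have \<phi>neg: "\<And>n::nat. \<phi> (- real n) = - real n"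
  proof -
    fix n :: nat show "\<phi> (- real n) = - real n"
    proof (induction n)
      case 0 then show ?case by (simp add: \<phi>_def)
    next
      case (Suc n)
      have e1: "\<phi> (- real (Suc n) + 1) = \<phi> (- real (Suc n)) + 1" by (rule \<phi>per)
      have e2: "- real (Suc n) + 1 = - real n" by simp
      have "\<phi> (- real n) = \<phi> (- real (Suc n)) + 1" using e1 unfolding e2 .
      then show ?case using Suc.IH of_nat_Suc[of n] by linarith
    qed
  qed
  have \<phi>cont: "continuous_on UNIV \<phi>"
    using \<phi>d DERIV_continuous continuous_at_imp_continuous_on by blast
  have surj: "\<exists>x. \<phi> x = y" for y
  proof -
    define n where "n = nat (ceiling \<bar>y\<bar>)"
    have n1: "- real n \<le> y" "y \<le> real n" unfolding n_def by linarith+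
    show ?thesis
      using IVT'[of \<phi> "- real n" y "real n"] n1 \<phi>nat \<phi>neg \<phi>cont
      by (auto intro: continuous_on_subset)
  qed
  have injp: "inj \<phi>"
  proof (rule injI)
    fix a b assume "\<phi> a = \<phi> b"
    then show "a = b" using \<phi>mono[of a b] \<phi>mono[of b a] by (cases a b rule: linorder_cases) auto
  qed
  have "push \<phi> H = (\<lambda>x. V H * 1)"
  proof
    fix y
    obtain x where x: "\<phi> x = y" using surj by blast
    have "inv \<phi> y = x" using injp x by auto
    then show "push \<phi> H y = V H * 1"
      using Hp[of x] by (simp add: push_def d\<phi> VH g_def)
  qed
  then show ?thesis using \<phi>diff VH Ipos by auto
qed


theorem proposition3p1:
  fixes W :: "(real \<Rightarrow> real) \<Rightarrow> real"
  assumes pos: "\<And>H. H \<in> cont_plus \<Longrightarrow> W H > 0"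
    and hom: "\<And>H c. H \<in> cont_plus \<Longrightarrow> c > 0 \<Longrightarrow> W (\<lambda>x. c * H x) = c * W H"
    and inv: "\<And>H \<phi>. H \<in> cont_plus \<Longrightarrow> \<phi> \<in> diff0 \<Longrightarrow> W (push \<phi> H) = W H"
  shows "\<exists>c>0. \<forall>H\<in>cont_plus. W H = c * V H"
proof -
  have one: "(\<lambda>x. 1) \<in> cont_plus"
    unfolding cont_plus_def smooth_Cn periodic1_def using Cn_const by auto
  show ?thesis
  proof (intro exI conjI ballI)
    show "W (\<lambda>x. 1) > 0" using pos[OF one] .
    fix H assume H: "H \<in> cont_plus"
    from main_push[OF H] obtain \<phi> where V0: "V H > 0" and \<phi>: "\<phi> \<in> diff0"
      and p: "push \<phi> H = (\<lambda>x. V H * 1)" by blast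
    have "W H = W (push \<phi> H)" using inv[OF H \<phi>] by simp
    also have "\<dots> = V H * W (\<lambda>x. 1)" unfolding p by (rule hom[OF one V0])
    finally show "W H = W (\<lambda>x. 1) * V H" by simp
  qed
qed

end
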